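(* Let $\bm{A}=[\bm{A}_1\ \bm{A}_2]\in\mathbb{R}^{m\times(n_1+n_2)}$ have full column rank with $\bm{A}_j^\top\bm{A}_j=\bm{I}_j$, $\bm{C}:=\bm{A}_2^\top\bm{A}_1\ne0$, and suppose $r:=\operatorname{rank}(\bm{C})=\min\{n_1,n_2\}$. With $S_{11}:=[1,\infty)\times[1,\infty)$, $\min_{(\gamma_1,\gamma_2)\in S_{11}}\rho(\bm{M}(\gamma_1,\gamma_2))=\dfrac{\sqrt{1-\lambda_r(\bm{C}\bm{C}^\top)}-\sqrt{1-\lambda_1(\bm{C}\bm{C}^\top)}}{\sqrt{1-\lambda_r(\bm{C}\bm{C}^\top)}+\sqrt{1-\lambda_1(\bm{C}\bm{C}^\top)}}.$
   Context: $\rho$: spectral radius; $\lambda_i$: $i$-th largest eigenvalue. $\bm{M}(\gamma_1,\gamma_2)=\begin{bmatrix}(1-\gamma_1)\bm{I}_1&-\gamma_1\bm{C}^\top\\-\gamma_2(1-\gamma_1)\bm{C}&(1-\gamma_2)\bm{I}_2+\gamma_1\gamma_2\bm{C}\bm{C}^\top\end{bmatrix}$, the two-block gradient descent iteration matrix with stepsizes $\gamma_1,\gamma_2$. *)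

theory Defs
  imports "Jordan_Normal_Form.Spectral_Radius" "Jordan_Normal_Form.DL_Rank"
begin

text \<open>For a real symmetric
matrix the characteristic polynomial splits over the reals, so this list has full length.\<close>
definition eigs_desc :: "real mat \<Rightarrow> real list" where
  "eigs_desc A = rev (sorted_list_of_multiset (proots (char_poly A)))"

definition lambda_i :: "real mat \<Rightarrow> nat \<Rightarrow> real" where
  "lambda_i A i = eigs_desc A ! (i - 1)"

text \<open>Two-block gradient descent iteration matrix M(g1,g2), with C of size n2 x n1.\<close>
definition iterM :: "nat \<Rightarrow> nat \<Rightarrow> real mat \<Rightarrow> real \<Rightarrow> real \<Rightarrow> real mat" where
  "iterM n1 n2 C g1 g2 = four_block_mat
     ((1 - g1) \<cdot>\<^sub>m 1\<^sub>m n1)                 ((- g1) \<cdot>\<^sub>m transpose_mat C)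
     ((- (g2 * (1 - g1))) \<cdot>\<^sub>m C)        ((1 - g2) \<cdot>\<^sub>m 1\<^sub>m n2 + (g1 * g2) \<cdot>\<^sub>m (C * transpose_mat C))"

definition rho :: "real mat \<Rightarrow> real" where
  "rho M = spectral_radius (map_mat complex_of_real M)"

definition hcat :: "real mat \<Rightarrow> real mat \<Rightarrow> real mat" where
  "hcat A1 A2 = mat (dim_row A1) (dim_col A1 + dim_col A2)
     (\<lambda>(i,j). if j < dim_col A1 then A1 $$ (i,j) else A2 $$ (i, j - dim_col A1))"

end

theory Submission
  imports Defs
begin

definition iterMc :: "nat \<Rightarrow> nat \<Rightarrow> complex mat \<Rightarrow> complex \<Rightarrow> complex \<Rightarrow> complex mat" where
  "iterMc n1 n2 C g1 g2 = four_block_mat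
     ((1 - g1) \<cdot>\<^sub>m 1\<^sub>m n1)                 ((- g1) \<cdot>\<^sub>m transpose_mat C)
     ((- (g2 * (1 - g1))) \<cdot>\<^sub>m C)        ((1 - g2) \<cdot>\<^sub>m 1\<^sub>m n2 + (g1 * g2) \<cdot>\<^sub>m (C * transpose_mat C))"

lemma iterM_carrier: "C \<in> carrier_mat n2 n1 \<Longrightarrow> iterM n1 n2 C g1 g2 \<in> carrier_mat (n1+n2) (n1+n2)"
  unfolding iterM_def by (rule four_block_carrier_mat) auto

lemma iterM_map:
  assumes C: "C \<in> carrier_mat n2 n1"
  shows "map_mat complex_of_real (iterM n1 n2 C g1 g2) =
    iterMc n1 n2 (map_mat complex_of_real C) (complex_of_real g1) (complex_of_real g2)"
proof -
  have h: "map_mat complex_of_real (C * C\<^sup>T) = map_mat complex_of_real C * (map_mat complex_of_real C)\<^sup>T"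
    using of_real_hom.mat_hom_mult[of C n2 n1 "C\<^sup>T" n2] C by (simp add: map_mat_transpose)
  have gen: "map_mat complex_of_real ((1-g2) \<cdot>\<^sub>m 1\<^sub>m n2 + (g1*g2) \<cdot>\<^sub>m G) =
      (1 - complex_of_real g2) \<cdot>\<^sub>m 1\<^sub>m n2 + (complex_of_real g1 * complex_of_real g2) \<cdot>\<^sub>m map_mat complex_of_real G"
    if "G \<in> carrier_mat n2 n2" for G using that by (auto intro!: eq_matI)
  have G: "C * C\<^sup>T \<in> carrier_mat n2 n2" using C by auto
  show ?thesis
    unfolding iterM_def iterMc_def
    apply (subst map_four_block_mat[of _ n1 n1 _ n2 _ n2])
    using C apply auto[4]
    apply (intro cong_four_block_mat)
    using C apply (auto intro!: eq_matI simp: map_mat_transpose)[3]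
    unfolding gen[OF G] h ..
qed

lemma smult_mat_mult_vec':
  assumes "A \<in> carrier_mat nr nc" "v \<in> carrier_vec nc"
  shows "(k \<cdot>\<^sub>m A) *\<^sub>v v = k \<cdot>\<^sub>v (A *\<^sub>v v)"
  using assms by (intro eq_vecI) (auto simp: scalar_prod_def sum_distrib_left mult.assoc)

lemma iterMc_mult:
  fixes C :: "complex mat"
  assumes C: "C \<in> carrier_mat n2 n1" and x: "x \<in> carrier_vec n1" and y: "y \<in> carrier_vec n2"
  shows "iterMc n1 n2 C g1 g2 *\<^sub>v (x @\<^sub>v y) =
     ((1-g1) \<cdot>\<^sub>v x + (-g1) \<cdot>\<^sub>v (C\<^sup>T *\<^sub>v y)) @\<^sub>v
     ((-(g2*(1-g1))) \<cdot>\<^sub>v (C *\<^sub>v x) + ((1-g2) \<cdot>\<^sub>v y + (g1*g2) \<cdot>\<^sub>v (C *\<^sub>v (C\<^sup>T *\<^sub>v y))))"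
proof -
  have CT: "C\<^sup>T \<in> carrier_mat n1 n2" using C by auto
  have CC: "C * C\<^sup>T \<in> carrier_mat n2 n2" using C by auto
  show ?thesis
    unfolding iterMc_def
    apply (subst four_block_mat_mult_vec[of _ n1 n1 _ n2 _ n2])
    using C x y apply auto[6]
    using C CT CC x y
    by (simp add: smult_mat_mult_vec'[OF one_carrier_mat x] smult_mat_mult_vec'[OF CC y]
      add_mult_distrib_mat_vec[OF smult_carrier_mat[OF one_carrier_mat] smult_carrier_mat[OF CC] y]
      smult_mat_mult_vec'[OF one_carrier_mat y] assoc_mult_mat_vec[OF C CT y]
      smult_mat_mult_vec'[OF CT y] smult_mat_mult_vec'[OF C x])
qed

lemma iterMc_eig:
  fixes C :: "complex mat"
  assumes C: "C \<in> carrier_mat n2 n1" and x: "x \<in> carrier_vec n1" and y: "y \<in> carrier_vec n2"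
  shows "iterMc n1 n2 C g1 g2 *\<^sub>v (x @\<^sub>v y) = z \<cdot>\<^sub>v (x @\<^sub>v y) \<longleftrightarrow>
    (\<forall>j<n1. (1-g1) * x$j - g1 * (C\<^sup>T *\<^sub>v y)$j = z * x$j) \<and>
    (\<forall>i<n2. -(g2*(1-g1)) * (C *\<^sub>v x)$i + (1-g2) * y$i + g1*g2 * (C *\<^sub>v (C\<^sup>T *\<^sub>v y))$i = z * y$i)"
  (is "?L \<longleftrightarrow> ?R")
proof -
  have e: "z \<cdot>\<^sub>v (x @\<^sub>v y) = (z \<cdot>\<^sub>v x) @\<^sub>v (z \<cdot>\<^sub>v y)"
    using x y by (intro eq_vecI) auto
  have "?L \<longleftrightarrow> ((1-g1) \<cdot>\<^sub>v x + (-g1) \<cdot>\<^sub>v (C\<^sup>T *\<^sub>v y)) = z \<cdot>\<^sub>v x \<and>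
     ((-(g2*(1-g1))) \<cdot>\<^sub>v (C *\<^sub>v x) + ((1-g2) \<cdot>\<^sub>v y + (g1*g2) \<cdot>\<^sub>v (C *\<^sub>v (C\<^sup>T *\<^sub>v y)))) = z \<cdot>\<^sub>v y"
    unfolding iterMc_mult[OF C x y] e
    by (rule append_vec_eq[of _ n1]) (use C x y in auto)
  also have "\<dots> \<longleftrightarrow> ?R"
    using C x y by (auto simp: vec_eq_iff algebra_simps)
  finally show ?thesis .
qed


lemma quad_mod:
  fixes z :: complex and t d :: real
  assumes eq: "z^2 - of_real t * z + of_real d = 0" and disc: "t^2 \<le> 4*d"
  shows "cmod z = sqrt d"
proof -
  obtain p q where z: "z = Complex p q" by (cases z)
  have "Re (z^2 - of_real t * z + of_real d) = p^2 - q^2 - t*p + d"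
    by (simp add: z power2_eq_square)
  with eq have e1: "p^2 - q^2 - t*p + d = 0" by simp
  have "Im (z^2 - of_real t * z + of_real d) = 2*p*q - t*q"
    by (simp add: z power2_eq_square)
  with eq have e2: "2*p*q - t*q = 0" by simp
  have "p^2 + q^2 = d"
  proof (cases "q = 0")
    case True
    with e1 have "(p - t/2)^2 = t^2/4 - d" by (simp add: power2_eq_square algebra_simps)
    moreover have "(p - t/2)^2 \<ge> 0" by simp
    ultimately have "(p - t/2)^2 = 0" using disc by linarith
    hence tp: "t = 2*p" by simp
    have "p^2 - q^2 - t*p + d = d - p*p" using True tp by (simp add: power2_eq_square algebra_simps)
    with True e1 show ?thesis by (simp add: power2_eq_square)
  next
    case False
    from e2 have "(2*p - t)*q = 0" by (simp add: algebra_simps)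
    with False have tp: "t = 2*p" by simp
    have "p^2 - q^2 - t*p + d = d - p*p - q*q" using tp by (simp add: power2_eq_square algebra_simps)
    with e1 show ?thesis by (simp add: power2_eq_square)
  qed
  thus ?thesis unfolding z cmod_def by simp
qed

lemma quad_bound:
  fixes t d R :: real
  assumes all: "\<And>z::complex. z^2 - of_real t * z + of_real d = 0 \<Longrightarrow> cmod z \<le> R"
  shows "d \<le> R^2 \<and> \<bar>t\<bar> * R \<le> R^2 + d \<and> \<bar>t\<bar> \<le> 2*R"
proof (cases "4*d \<le> t^2")
  case True
  define s where "s = sqrt (t^2 - 4*d)"
  have s2: "s^2 = t^2 - 4*d" and s0: "s \<ge> 0" using True unfolding s_def by auto
  define z1 where "z1 = (t + s)/2"
  define z2 where "z2 = (t - s)/2"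
  have q1: "z1^2 - t*z1 + d = 0" unfolding z1_def using s2 by (simp add: power2_eq_square field_simps)
  have q2: "z2^2 - t*z2 + d = 0" unfolding z2_def using s2 by (simp add: power2_eq_square field_simps)
  have "(complex_of_real z1)^2 - of_real t * of_real z1 + of_real d = of_real (z1^2 - t*z1 + d)" by simp
  with q1 have "\<bar>z1\<bar> \<le> R" using all[of "of_real z1"] by simp
  have "(complex_of_real z2)^2 - of_real t * of_real z2 + of_real d = of_real (z2^2 - t*z2 + d)" by simp
  with q2 have "\<bar>z2\<bar> \<le> R" using all[of "of_real z2"] by simp
  have sum: "t = z1 + z2" and prod: "d = z1 * z2" unfolding z1_def z2_def using s2
    by (auto simp: power2_eq_square field_simps)
  have R0: "R \<ge> 0" using \<open>\<bar>z1\<bar> \<le> R\<close> by simp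
  have "\<bar>z1*z2\<bar> \<le> R*R" unfolding abs_mult by (rule mult_mono, fact, fact, fact, simp)
  hence A: "d \<le> R^2" using prod by (simp add: power2_eq_square)
  have "(R - z1)*(R - z2) \<ge> 0" using \<open>\<bar>z1\<bar> \<le> R\<close> \<open>\<bar>z2\<bar> \<le> R\<close> by simp
  hence B1: "t*R \<le> R^2 + d" using sum prod by (simp add: power2_eq_square algebra_simps)
  have "(R + z1)*(R + z2) \<ge> 0" using \<open>\<bar>z1\<bar> \<le> R\<close> \<open>\<bar>z2\<bar> \<le> R\<close> by simp
  hence B2: "-t*R \<le> R^2 + d" using sum prod by (simp add: power2_eq_square algebra_simps)
  have C: "\<bar>t\<bar> \<le> 2*R" using sum \<open>\<bar>z1\<bar> \<le> R\<close> \<open>\<bar>z2\<bar> \<le> R\<close> by linarith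
  show ?thesis using A B1 B2 C by (cases "t \<ge> 0") auto
next
  case False
  define s where "s = sqrt (4*d - t^2)"
  have s2: "s^2 = 4*d - t^2" and s0: "s \<ge> 0" using False unfolding s_def by auto
  define z where "z = Complex (t/2) (s/2)"
  have "z^2 - of_real t * z + of_real d = 0"
    unfolding z_def using s2 by (simp add: complex_eq_iff power2_eq_square field_simps)
  from all[OF this] have zR: "cmod z \<le> R" .
  have d0: "d \<ge> 0" using False by (smt (verit) zero_le_power2)
  have "cmod z = sqrt d" by (rule quad_mod[OF \<open>z^2 - of_real t * z + of_real d = 0\<close>], use False in simp)
  with zR have sd: "sqrt d \<le> R" by simp
  have R0: "R \<ge> 0" using zR norm_ge_zero order_trans by blast
  have A: "d \<le> R^2" using sd d0 by (metis real_sqrt_le_iff real_sqrt_unique sqrt_le_D)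
  have tt: "\<bar>t\<bar> \<le> 2 * sqrt d"
  proof -
    have "t^2 \<le> (2*sqrt d)^2" using False d0 by (simp add: power2_eq_square)
    hence "\<bar>t\<bar>^2 \<le> (2*sqrt d)^2" by simp
    thus ?thesis by (rule power2_le_imp_le) (simp add: d0)
  qed
  have C: "\<bar>t\<bar> \<le> 2*R" using tt sd by linarith
  have "\<bar>t\<bar>*R \<le> 2*sqrt d * R" using tt R0 by (simp add: mult_right_mono)
  also have "\<dots> \<le> R^2 + d"
  proof -
    have "(R - sqrt d)^2 \<ge> 0" by simp
    thus ?thesis using d0 by (simp add: power2_eq_square algebra_simps)
  qed
  finally show ?thesis using A C by simp
qed

lemma lower_final:
  fixes a b R P d :: real
  assumes a0: "a > 0" and ab: "a \<le> b" and R0: "R \<ge> 0" and P0: "P > 0"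
    and dR: "d \<le> R^2"
    and ha1: "\<bar>d + 1 - P*a\<bar> * R \<le> R^2 + d" and ha2: "\<bar>d + 1 - P*a\<bar> \<le> 2*R"
    and hb1: "\<bar>d + 1 - P*b\<bar> * R \<le> R^2 + d" and hb2: "\<bar>d + 1 - P*b\<bar> \<le> 2*R"
  shows "(sqrt b - sqrt a)/(sqrt b + sqrt a) \<le> R"
proof -
  have sa: "sqrt a > 0" using a0 by simp
  have sab: "sqrt a \<le> sqrt b" using ab by simp
  have den: "sqrt b + sqrt a > 0" using sa sab by linarith
  consider "R = 0" | "R \<ge> 1" | "0 < R \<and> R < 1" using R0 by linarith
  thus ?thesis
  proof cases
    case 1
    with ha2 hb2 have "P*a = P*b" by simp
    with P0 have "a = b" by simp
    thus ?thesis using 1 by simp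
  next
    case 2
    have "sqrt b - sqrt a \<le> sqrt b + sqrt a" using sa by simp
    hence "(sqrt b - sqrt a)/(sqrt b + sqrt a) \<le> 1" using den by (simp add: divide_le_eq_1)
    thus ?thesis using 2 by simp
  next
    case 3
    hence Rp: "R > 0" and R1: "R < 1" by auto
    have "(d + 1 - P*a) * R \<le> R^2 + d" using ha1 Rp
      by (smt (verit, best) abs_ge_self mult_right_mono)
    hence A: "P*a*R \<ge> (1-R)*(R-d)" by (simp add: power2_eq_square algebra_simps)
    have "-(d + 1 - P*b) * R \<le> R^2 + d" using hb1 Rp
      by (smt (verit, best) abs_ge_minus_self mult_right_mono)
    hence B: "P*b*R \<le> (1+R)*(R+d)" by (simp add: power2_eq_square algebra_simps)
    have c1: "b*(1-R)^2*(P*R) \<le> (1+R)*(R+d)*(1-R)^2"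
      using mult_right_mono[OF B, of "(1-R)^2"] by (simp add: algebra_simps)
    have c2: "(1-R)*(R-d)*(1+R)^2 \<le> a*(1+R)^2*(P*R)"
      using mult_right_mono[OF A, of "(1+R)^2"] by (simp add: algebra_simps)
    have key: "(1+R)*(R+d)*(1-R)^2 \<le> (1-R)*(R-d)*(1+R)^2"
    proof -
      have "(1-R)*(R-d)*(1+R)^2 - (1+R)*(R+d)*(1-R)^2 = (1-R)*(1+R)*(2*R^2 - 2*d)"
        by (simp add: power2_eq_square algebra_simps)
      moreover have "(1-R)*(1+R)*(2*R^2 - 2*d) \<ge> 0" using R1 Rp dR by simp
      ultimately show ?thesis by linarith
    qed
    have "b*(1-R)^2*(P*R) \<le> a*(1+R)^2*(P*R)" using c1 c2 key by linarith
    hence sq: "b*(1-R)^2 \<le> a*(1+R)^2" using P0 Rp by simp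
    have "sqrt (b*(1-R)^2) \<le> sqrt (a*(1+R)^2)" using sq by simp
    hence "sqrt b * (1-R) \<le> sqrt a * (1+R)" using R1 Rp by (simp add: real_sqrt_mult)
    hence "sqrt b - sqrt a \<le> R * (sqrt b + sqrt a)" by (simp add: algebra_simps)
    thus ?thesis using den by (simp add: divide_le_eq)
  qed
qed


lemma upper_construct:
  fixes a b :: real
  assumes a0: "a > 0" and ab: "a \<le> b" and b1: "b \<le> 1"
  defines "v \<equiv> (sqrt b - sqrt a)/(sqrt b + sqrt a)"
  shows "\<exists>x y. 0 \<le> x \<and> x \<le> v \<and> 0 \<le> y \<and> x*y = v^2 \<and>
     (\<forall>\<mu>. a \<le> \<mu> \<longrightarrow> \<mu> \<le> b \<longrightarrow> (v^2 + 1 - (1+x)*(1+y)*\<mu>)^2 \<le> 4*v^2)"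
proof -
  define sa where "sa = sqrt a"
  define sb where "sb = sqrt b"
  have sa0: "sa > 0" using a0 unfolding sa_def by simp
  have sab: "sa \<le> sb" using ab unfolding sa_def sb_def by simp
  have sb0: "sb > 0" using sa0 sab by linarith
  have sa2: "sa^2 = a" and sb2: "sb^2 = b" using a0 ab unfolding sa_def sb_def by auto
  have vdef: "v = (sb - sa)/(sb + sa)" unfolding v_def sa_def sb_def ..
  have v0: "v \<ge> 0" using sab sa0 unfolding vdef by simp
  have v1: "1 + v = 2*sb/(sb+sa)" unfolding vdef using sa0 sb0 by (simp add: field_simps)
  have v2: "1 - v = 2*sa/(sb+sa)" unfolding vdef using sa0 sb0 by (simp add: field_simps)
  define P where "P = (1+v)^2 / b"
  have Pb: "P * b = (1+v)^2" unfolding P_def using sb0 sb2 by auto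
  have Pa: "P * a = (1-v)^2"
  proof -
    have "(1+v)*sa = (1-v)*sb" unfolding v1 v2 using sa0 sb0 by (simp add: field_simps)
    hence "((1+v)*sa)^2 = ((1-v)*sb)^2" by simp
    hence "(1+v)^2 * a = (1-v)^2 * b" unfolding sa2[symmetric] sb2[symmetric] by (simp add: power_mult_distrib)
    thus ?thesis unfolding P_def using sb0 sb2 by (auto simp: field_simps)
  qed
  have PB: "P \<ge> (1+v)^2"
  proof -
    have "(1+v)^2 * b \<le> (1+v)^2 * 1" using b1 by (intro mult_left_mono) auto
    thus ?thesis using Pb by (smt (verit) ab a0 mult_le_cancel_left_pos mult.commute)
  qed
  define s where "s = P - 1 - v^2"
  have s2v: "s \<ge> 2*v" using PB unfolding s_def by (simp add: power2_eq_square algebra_simps)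
  define D where "D = sqrt (s^2 - 4*v^2)"
  have disc: "s^2 - 4*v^2 \<ge> 0"
  proof -
    have "(2*v)^2 \<le> s^2" using s2v v0 by (intro power_mono) auto
    thus ?thesis by (simp add: power2_eq_square)
  qed
  have D2: "D^2 = s^2 - 4*v^2" and D0: "D \<ge> 0" using disc unfolding D_def by auto
  have Ds: "D \<le> s"
  proof -
    have "D^2 \<le> s^2" using D2 by simp
    thus ?thesis using s2v v0 D0 by (meson power2_le_imp_le order_trans zero_le_mult_iff zero_le_numeral)
  qed
  define x where "x = (s - D)/2"
  define y where "y = (s + D)/2"
  have x0: "x \<ge> 0" using Ds unfolding x_def by simp
  have y0: "y \<ge> 0" using Ds D0 unfolding y_def by simp
  have "x*y = (s^2 - D^2)/4" unfolding x_def y_def by (simp add: power2_eq_square field_simps)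
  hence xy: "x*y = v^2" using D2 by simp
  have xley: "x \<le> y" unfolding x_def y_def using D0 by simp
  have xv: "x \<le> v"
  proof -
    have "x*x \<le> x*y" using xley x0 by (simp add: mult_left_mono)
    hence "x^2 \<le> v^2" using xy by (simp add: power2_eq_square)
    thus ?thesis using v0 by (rule power2_le_imp_le)
  qed
  have "(1+x)*(1+y) = 1 + (x+y) + x*y" by (simp add: algebra_simps)
  also have "x + y = s" unfolding x_def y_def by (simp add: field_simps)
  finally have P': "(1+x)*(1+y) = P" using xy unfolding s_def by simp
  have bound: "(v^2 + 1 - (1+x)*(1+y)*\<mu>)^2 \<le> 4*v^2" if "a \<le> \<mu>" "\<mu> \<le> b" for \<mu>
  proof -
    have P0: "P \<ge> 0" using Pb sb0 sb2 by (metis P_def divide_nonneg_nonneg zero_le_power2 less_eq_real_def)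
    have "P*a \<le> P*\<mu>" "P*\<mu> \<le> P*b" using that P0 by (auto intro: mult_left_mono)
    hence lo: "v^2 + 1 - P*\<mu> \<ge> -2*v" and hi: "v^2 + 1 - P*\<mu> \<le> 2*v"
      using Pa Pb by (simp_all add: power2_eq_square algebra_simps)
    have "\<bar>v^2 + 1 - P*\<mu>\<bar> \<le> 2*v" using lo hi by linarith
    hence "\<bar>v^2 + 1 - P*\<mu>\<bar>^2 \<le> (2*v)^2" by (intro power_mono) auto
    thus ?thesis unfolding P' by (simp add: power2_eq_square)
  qed
  show ?thesis using x0 xv y0 xy bound by blast
qed


lemma mult_mat_zero_vec[simp]: "A \<in> carrier_mat nr nc \<Longrightarrow> A *\<^sub>v 0\<^sub>v nc = (0\<^sub>v nr :: 'a :: comm_ring vec)"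
  by (intro eq_vecI) (auto simp: scalar_prod_def)

lemma key_rel:
  fixes g1 g2 z w y s :: complex
  assumes h1: "(1-g1-z)*w = g1*s" and h2: "-(g2*(1-g1))*w + (1-g2)*y + g1*g2*s = z*y"
  shows "g1*g2*z*s = (z-1+g1)*(z-1+g2)*y"
proof -
  have "g1*g2*z*s - (z-1+g1)*(z-1+g2)*y = - ((1-g1-z)*(-(g2*(1-g1))*w + (1-g2)*y + g1*g2*s - z*y) + g2*(1-g1)*((1-g1-z)*w - g1*s))"
    by (simp add: algebra_simps)
  also have "\<dots> = 0" using h1 h2 by simp
  finally show ?thesis by simp
qed

lemma UB:
  fixes Cc :: "complex mat" and g1 g2 v lr l1 :: real
  assumes C: "Cc \<in> carrier_mat n2 n1"
    and g1: "g1 \<ge> 1" and g2: "g2 \<ge> 1" and v0: "v \<ge> 0" and d: "(g1-1)*(g2-1) = v^2"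
    and quad: "\<And>t. lr \<le> t \<Longrightarrow> t \<le> l1 \<Longrightarrow> (v^2 + 1 - g1*g2*(1-t))^2 \<le> 4*v^2"
    and Heig: "\<And>lam y. y \<in> carrier_vec n2 \<Longrightarrow> y \<noteq> 0\<^sub>v n2 \<Longrightarrow> Cc *\<^sub>v (Cc\<^sup>T *\<^sub>v y) = lam \<cdot>\<^sub>v y \<Longrightarrow>
        lam = 0 \<or> (\<exists>t. lam = complex_of_real t \<and> lr \<le> t \<and> t \<le> l1)"
    and Hcase: "((\<forall>x\<in>carrier_vec n1. Cc\<^sup>T *\<^sub>v (Cc *\<^sub>v x) = 0\<^sub>v n1 \<longrightarrow> x = 0\<^sub>v n1) \<and> \<bar>1-g2\<bar> \<le> v) \<or>
       ((\<forall>y\<in>carrier_vec n2. Cc *\<^sub>v (Cc\<^sup>T *\<^sub>v y) = 0\<^sub>v n2 \<longrightarrow> y = 0\<^sub>v n2) \<and> \<bar>1-g1\<bar> \<le> v)"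
    and x: "x \<in> carrier_vec n1" and y: "y \<in> carrier_vec n2" and nz: "x @\<^sub>v y \<noteq> 0\<^sub>v (n1+n2)"
    and eig: "iterMc n1 n2 Cc (complex_of_real g1) (complex_of_real g2) *\<^sub>v (x @\<^sub>v y) = z \<cdot>\<^sub>v (x @\<^sub>v y)"
  shows "cmod z \<le> v"
proof -
  define G1 where "G1 = complex_of_real g1"
  define G2 where "G2 = complex_of_real g2"
  define u where "u = Cc\<^sup>T *\<^sub>v y"
  define w where "w = Cc *\<^sub>v x"
  define s where "s = Cc *\<^sub>v u"
  have u: "u \<in> carrier_vec n1" and w: "w \<in> carrier_vec n2" and s: "s \<in> carrier_vec n2"
    unfolding u_def w_def s_def using C x y by auto
  note E = iterMc_eig[OF C x y, of G1 G2 z, folded G1_def G2_def, THEN iffD1, OF eig[folded G1_def G2_def],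
     folded u_def w_def, folded s_def]
  have E1: "\<And>j. j < n1 \<Longrightarrow> (1-G1) * x$j - G1 * u$j = z * x$j" using E by auto
  have E2: "\<And>i. i < n2 \<Longrightarrow> -(G2*(1-G1)) * w$i + (1-G2) * y$i + G1*G2 * s$i = z * y$i" using E by auto
  have G1ne: "G1 \<noteq> 0" and G2ne: "G2 \<noteq> 0" unfolding G1_def G2_def using g1 g2 by auto
  have vec1: "G1 \<cdot>\<^sub>v u = (1-G1-z) \<cdot>\<^sub>v x"
    by (rule eq_vecI) (use E1 u x in \<open>auto simp: algebra_simps\<close>)
  have "Cc *\<^sub>v (G1 \<cdot>\<^sub>v u) = Cc *\<^sub>v ((1-G1-z) \<cdot>\<^sub>v x)" unfolding vec1 ..
  hence vec2: "G1 \<cdot>\<^sub>v s = (1-G1-z) \<cdot>\<^sub>v w" unfolding s_def w_def using C u x by (simp add: mult_mat_vec)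
  have K: "\<And>i. i < n2 \<Longrightarrow> G1*G2*z*s$i = (z-1+G1)*(z-1+G2)*y$i"
  proof -
    fix i assume i: "i < n2"
    have "(1-G1-z)*w$i = G1*s$i" using arg_cong[OF vec2, of "\<lambda>v. v$i"] i s w by simp
    from key_rel[OF this E2[OF i]] show "G1*G2*z*s$i = (z-1+G1)*(z-1+G2)*y$i" .
  qed
  have nzxy: "x \<noteq> 0\<^sub>v n1 \<or> y \<noteq> 0\<^sub>v n2"
  proof (rule ccontr)
    assume "\<not> ?thesis"
    hence "x = 0\<^sub>v n1" "y = 0\<^sub>v n2" by auto
    hence "x @\<^sub>v y = 0\<^sub>v (n1+n2)" by (intro eq_vecI) auto
    with nz show False by simp
  qed
  have cG1: "cmod (1 - G1) = \<bar>1-g1\<bar>" unfolding G1_def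
    by (metis norm_of_real of_real_1 of_real_diff)
  have cG2: "cmod (1 - G2) = \<bar>1-g2\<bar>" unfolding G2_def
    by (metis norm_of_real of_real_1 of_real_diff)
  show ?thesis
  proof (cases "y = 0\<^sub>v n2")
    case True
    hence u0: "u = 0\<^sub>v n1" and s0: "s = 0\<^sub>v n2" unfolding u_def s_def using C by auto
    with nzxy True have "x \<noteq> 0\<^sub>v n1" by auto
    then obtain j where j: "j < n1" "x$j \<noteq> 0" using x by (metis eq_vecI carrier_vecD index_zero_vec(1) index_zero_vec(2))
    from E1[OF j(1)] u0 j have "(1 - G1 - z) * x$j = 0" by (simp add: algebra_simps)
    with j have zG1: "z = 1 - G1" by simp
    show ?thesis
    proof (cases "g1 = 1")
      case True thus ?thesis using zG1 v0 unfolding G1_def by simp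
    next
      case False
      hence G1': "1 - G1 \<noteq> 0" unfolding G1_def by (metis eq_iff_diff_eq_0 of_real_1 of_real_eq_iff)
      have w0: "w = 0\<^sub>v n2"
      proof (rule eq_vecI)
        fix i assume "i < dim_vec (0\<^sub>v n2 :: complex vec)"
        hence i: "i < n2" by simp
        from E2[OF i] True s0 i have "G2*(1-G1) * w$i = 0" by simp
        thus "w$i = 0\<^sub>v n2 $ i" using G1' G2ne i by simp
      qed (use w in auto)
      from Hcase show ?thesis
      proof
        assume "(\<forall>x\<in>carrier_vec n1. Cc\<^sup>T *\<^sub>v (Cc *\<^sub>v x) = 0\<^sub>v n1 \<longrightarrow> x = 0\<^sub>v n1) \<and> \<bar>1-g2\<bar> \<le> v"
        hence "x = 0\<^sub>v n1" using x w0 C unfolding w_def by auto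
        with \<open>x \<noteq> 0\<^sub>v n1\<close> show ?thesis by simp
      next
        assume "(\<forall>y\<in>carrier_vec n2. Cc *\<^sub>v (Cc\<^sup>T *\<^sub>v y) = 0\<^sub>v n2 \<longrightarrow> y = 0\<^sub>v n2) \<and> \<bar>1-g1\<bar> \<le> v"
        thus ?thesis using zG1 cG1 by simp
      qed
    qed
  next
    case ynz: False
    show ?thesis
    proof (cases "z = 0")
      case True thus ?thesis using v0 by simp
    next
      case znz: False
      define lam where "lam = (z-1+G1)*(z-1+G2)/(G1*G2*z)"
      have slam: "s = lam \<cdot>\<^sub>v y"
      proof (rule eq_vecI)
        fix i assume "i < dim_vec (lam \<cdot>\<^sub>v y)"
        hence i: "i < n2" using y by simp
        from K[OF i] have "s$i = (z-1+G1)*(z-1+G2)*y$i/(G1*G2*z)" using G1ne G2ne znz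
          by (simp add: field_simps)
        thus "s$i = (lam \<cdot>\<^sub>v y)$i" using i y unfolding lam_def by simp
      qed (use s y in auto)
      from Heig[OF y ynz slam[unfolded s_def u_def]]
      show ?thesis
      proof
        assume lam0: "lam = 0"
        hence prod0: "(z-1+G1)*(z-1+G2) = 0" unfolding lam_def using G1ne G2ne znz by simp
        have s0: "s = 0\<^sub>v n2" using slam lam0 y by auto
        from Hcase show ?thesis
        proof
          assume "(\<forall>y\<in>carrier_vec n2. Cc *\<^sub>v (Cc\<^sup>T *\<^sub>v y) = 0\<^sub>v n2 \<longrightarrow> y = 0\<^sub>v n2) \<and> \<bar>1-g1\<bar> \<le> v"
          hence "y = 0\<^sub>v n2" using y s0 unfolding s_def u_def by auto
          with ynz show ?thesis by simp
        next
          assume HA: "(\<forall>x\<in>carrier_vec n1. Cc\<^sup>T *\<^sub>v (Cc *\<^sub>v x) = 0\<^sub>v n1 \<longrightarrow> x = 0\<^sub>v n1) \<and> \<bar>1-g2\<bar> \<le> v"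
          from prod0 have "z-1+G1 = 0 \<or> z-1+G2 = 0" by simp
          hence "z = 1 - G1 \<or> z = 1 - G2" by (auto simp: algebra_simps)
          thus ?thesis
          proof
            assume zG2: "z = 1 - G2" thus ?thesis using HA cG2 by simp
          next
            assume zG1: "z = 1 - G1"
            show ?thesis
            proof (cases "g1 = g2")
              case True thus ?thesis using zG1 HA cG1 by simp
            next
              case neq: False
              have G1': "1 - G1 \<noteq> 0" using zG1 znz by simp
              have G12: "G1 - G2 \<noteq> 0" using neq unfolding G1_def G2_def by simp
              have u0: "u = 0\<^sub>v n1"
              proof (rule eq_vecI)
                fix j assume "j < dim_vec (0\<^sub>v n1 :: complex vec)"
                hence j: "j < n1" by simp
                from E1[OF j] zG1 have "G1 * u$j = 0" by (simp add: algebra_simps)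
                thus "u$j = 0\<^sub>v n1 $ j" using G1ne j by simp
              qed (use u in auto)
              define c where "c = G2*(1-G1)/(G1-G2)"
              have cnz: "c \<noteq> 0" unfolding c_def using G1' G12 G2ne by simp
              have yc: "y = c \<cdot>\<^sub>v w"
              proof (rule eq_vecI)
                fix i assume "i < dim_vec (c \<cdot>\<^sub>v w)"
                hence i: "i < n2" using w by simp
                from E2[OF i] zG1 s0 i have "(G1 - G2) * y$i = G2*(1-G1) * w$i"
                  by (simp add: algebra_simps)
                hence "y$i = G2*(1-G1) * w$i / (G1-G2)" using G12 by (simp add: field_simps)
                thus "y$i = (c \<cdot>\<^sub>v w)$i" using i w unfolding c_def by simp
              qed (use y w in auto)
              have "c \<cdot>\<^sub>v (Cc\<^sup>T *\<^sub>v w) = 0\<^sub>v n1"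
                using u0 unfolding u_def yc using C w by (simp add: mult_mat_vec)
              hence "Cc\<^sup>T *\<^sub>v w = 0\<^sub>v n1"
              proof (intro eq_vecI)
                fix j assume h: "c \<cdot>\<^sub>v (Cc\<^sup>T *\<^sub>v w) = 0\<^sub>v n1" and "j < dim_vec (0\<^sub>v n1 :: complex vec)"
                hence j: "j < n1" by simp
                from arg_cong[OF h, of "\<lambda>v. v$j"] j C have "c * (Cc\<^sup>T *\<^sub>v w)$j = 0" by simp
                thus "(Cc\<^sup>T *\<^sub>v w)$j = 0\<^sub>v n1 $ j" using cnz j by simp
              qed (use C in auto)
              hence "x = 0\<^sub>v n1" using HA x unfolding w_def by auto
              hence "y = 0\<^sub>v n2" using yc C unfolding w_def by auto
              with ynz show ?thesis by simp
            qed
          qed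
        qed
      next
        assume "\<exists>t. lam = complex_of_real t \<and> lr \<le> t \<and> t \<le> l1"
        then obtain t where lt: "lam = complex_of_real t" "lr \<le> t" "t \<le> l1" by auto
        have "(z-1+G1)*(z-1+G2) = G1*G2*z*complex_of_real t"
          using lt(1) G1ne G2ne znz unfolding lam_def by (simp add: field_simps)
        hence "z^2 - complex_of_real (v^2 + 1 - g1*g2*(1-t)) * z + complex_of_real (v^2) = 0"
          unfolding G1_def G2_def d[symmetric]
          by (simp add: power2_eq_square algebra_simps)
        from quad_mod[OF this quad[OF lt(2,3)]] v0 show ?thesis by simp
      qed
    qed
  qed
qed


abbreviation cmat :: "real mat \<Rightarrow> complex mat" where "cmat A \<equiv> map_mat complex_of_real A"

lemma conj_real_mat_vec:
  assumes B: "B \<in> carrier_mat k l" and y: "y \<in> carrier_vec l"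
  shows "conjugate (cmat B *\<^sub>v y) = cmat B *\<^sub>v conjugate y"
proof (rule eq_vecI)
  fix i assume "i < dim_vec (cmat B *\<^sub>v conjugate y)"
  hence i: "i < k" using B by simp
  have "conjugate (cmat B *\<^sub>v y) $ i = cnj (\<Sum>j<l. complex_of_real (B $$ (i,j)) * y $ j)"
    using i B y by (simp add: scalar_prod_def lessThan_atLeast0)
  also have "\<dots> = (\<Sum>j<l. complex_of_real (B $$ (i,j)) * cnj (y $ j))" by simp
  also have "\<dots> = (cmat B *\<^sub>v conjugate y) $ i"
    using i B y by (simp add: scalar_prod_def lessThan_atLeast0)
  finally show "conjugate (cmat B *\<^sub>v y) $ i = (cmat B *\<^sub>v conjugate y) $ i" .
qed (use B in auto)

lemma gram_eig:
  fixes B :: "real mat"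
  assumes B: "B \<in> carrier_mat k l" and y: "y \<in> carrier_vec k" and ynz: "y \<noteq> 0\<^sub>v k"
    and eq: "cmat B *\<^sub>v ((cmat B)\<^sup>T *\<^sub>v y) = lam \<cdot>\<^sub>v y"
  shows "Im lam = 0 \<and> Re lam \<ge> 0"
proof -
  define Bc where "Bc = cmat B"
  have Bc: "Bc \<in> carrier_mat k l" and BcT: "Bc\<^sup>T \<in> carrier_mat l k" using B unfolding Bc_def by auto
  define w where "w = Bc\<^sup>T *\<^sub>v y"
  have w: "w \<in> carrier_vec l" unfolding w_def using BcT y by auto
  have cy: "conjugate y \<in> carrier_vec k" using y by simp
  have "conjugate y \<bullet> (Bc *\<^sub>v w) = (Bc\<^sup>T *\<^sub>v conjugate y) \<bullet> w"
    using transpose_vec_mult_scalar[OF Bc w cy] by simp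
  also have "Bc\<^sup>T *\<^sub>v conjugate y = conjugate w"
    unfolding w_def Bc_def map_mat_transpose
    by (rule conj_real_mat_vec[symmetric, of _ l k]) (use B y in auto)
  also have "conjugate w \<bullet> w = w \<bullet>c w" using conjugate_vec_sprod_comm[OF w w] by simp
  finally have e1: "conjugate y \<bullet> (Bc *\<^sub>v w) = w \<bullet>c w" .
  have "conjugate y \<bullet> (Bc *\<^sub>v w) = conjugate y \<bullet> (lam \<cdot>\<^sub>v y)" using eq unfolding w_def Bc_def by simp
  also have "\<dots> = lam * (conjugate y \<bullet> y)" using cy y by simp
  also have "conjugate y \<bullet> y = y \<bullet>c y" using conjugate_vec_sprod_comm[OF y y] by simp
  finally have e2: "w \<bullet>c w = lam * (y \<bullet>c y)" using e1 by simp
  have p: "y \<bullet>c y > 0" using y ynz by simp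
  have q: "w \<bullet>c w \<ge> 0" by (rule conjugate_square_ge_0_vec)
  from p have pi: "Im (y \<bullet>c y) = 0" "Re (y \<bullet>c y) > 0" by (auto simp: less_complex_def)
  from q have qi: "Im (w \<bullet>c w) = 0" "Re (w \<bullet>c w) \<ge> 0" by (auto simp: less_eq_complex_def)
  have "Im (w \<bullet>c w) = Im lam * Re (y \<bullet>c y)" unfolding e2 using pi by simp
  hence "Im lam = 0" using qi pi by simp
  moreover have "Re (w \<bullet>c w) = Re lam * Re (y \<bullet>c y)" unfolding e2 using pi by simp
  hence "Re lam \<ge> 0" using qi pi by (simp add: zero_le_mult_iff)
  ultimately show ?thesis by simp
qed

lemma cmat_gram: "B \<in> carrier_mat k l \<Longrightarrow> cmat (B * B\<^sup>T) = cmat B * (cmat B)\<^sup>T"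
  by (simp add: of_real_hom.mat_hom_mult[of B k l "B\<^sup>T" k] map_mat_transpose)

lemma gram_eigenvalue:
  fixes B :: "real mat"
  assumes B: "B \<in> carrier_mat k l" and ev: "eigenvalue (cmat (B * B\<^sup>T)) lam"
  shows "\<exists>t. lam = complex_of_real t \<and> t \<ge> 0 \<and> poly (char_poly (B * B\<^sup>T)) t = 0"
proof -
  from ev obtain y where y: "y \<in> carrier_vec k" "y \<noteq> 0\<^sub>v k" "cmat (B*B\<^sup>T) *\<^sub>v y = lam \<cdot>\<^sub>v y"
    unfolding eigenvalue_def eigenvector_def using B by auto
  have "cmat B *\<^sub>v ((cmat B)\<^sup>T *\<^sub>v y) = lam \<cdot>\<^sub>v y"
    using y(3) B y(1) unfolding cmat_gram[OF B] by (subst assoc_mult_mat_vec[symmetric]) auto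
  from gram_eig[OF B y(1,2) this] have l: "Im lam = 0" "Re lam \<ge> 0" by auto
  hence lam: "lam = complex_of_real (Re lam)" by (simp add: complex_eq_iff)
  have G: "B * B\<^sup>T \<in> carrier_mat k k" using B by auto
  have "poly (char_poly (cmat (B*B\<^sup>T))) lam = 0"
    using ev eigenvalue_root_char_poly[of "cmat (B*B\<^sup>T)" k] G by auto
  hence "poly (map_poly complex_of_real (char_poly (B*B\<^sup>T))) (complex_of_real (Re lam)) = 0"
    using of_real_hom.char_poly_hom[OF G] lam by metis
  hence "poly (char_poly (B*B\<^sup>T)) (Re lam) = 0" by (simp add: of_real_hom.poly_map_poly)
  with lam l show ?thesis by blast
qed

lemma gram_split:
  fixes B :: "real mat"
  assumes B: "B \<in> carrier_mat k l"
  shows "\<exists>rs. char_poly (B * B\<^sup>T) = (\<Prod>r\<leftarrow>rs. [:-r, 1:]) \<and> length rs = k \<and> (\<forall>r\<in>set rs. r \<ge> 0)"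
proof -
  have G: "B * B\<^sup>T \<in> carrier_mat k k" using B by auto
  have Gc: "cmat (B * B\<^sup>T) \<in> carrier_mat k k" using G by auto
  from char_poly_factorized[OF Gc] obtain as where
    as: "char_poly (cmat (B * B\<^sup>T)) = (\<Prod>a\<leftarrow>as. [:- a, 1:])" "length as = k" by auto
  have re: "a = complex_of_real (Re a) \<and> Re a \<ge> 0" if a: "a \<in> set as" for a
  proof -
    have "poly (char_poly (cmat (B * B\<^sup>T))) a = 0" unfolding as(1) using a
      by (simp add: poly_prod_list prod_list_zero_iff)
    hence "eigenvalue (cmat (B * B\<^sup>T)) a" using eigenvalue_root_char_poly[OF Gc] by simp
    from gram_eigenvalue[OF B this] show ?thesis by auto
  qed
  interpret rp: map_poly_inj_idom_hom "complex_of_real" ..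
  define rs where "rs = map Re as"
  have "map_poly complex_of_real (\<Prod>r\<leftarrow>rs. [:-r, 1:]) = (\<Prod>r\<leftarrow>rs. [:-complex_of_real r, 1:])"
    by (simp add: rp.hom_prod_list o_def)
  also have "\<dots> = (\<Prod>a\<leftarrow>as. [:- a, 1:])" unfolding rs_def
    by (simp add: o_def) (metis (mono_tags, lifting) map_eq_conv re)
  also have "\<dots> = map_poly complex_of_real (char_poly (B * B\<^sup>T))"
    using as(1) of_real_hom.char_poly_hom[OF G] by metis
  finally have "map_poly complex_of_real (\<Prod>r\<leftarrow>rs. [:-r, 1:]) = map_poly complex_of_real (char_poly (B * B\<^sup>T))" .
  hence eq: "(\<Prod>r\<leftarrow>rs. [:-r, 1:]) = char_poly (B * B\<^sup>T)"
    by (metis rp.injectivity)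
  have "length rs = k" "\<forall>r\<in>set rs. r \<ge> 0" using as(2) re unfolding rs_def by auto
  thus ?thesis using eq by metis
qed


lemma det_smult_one: "det (x \<cdot>\<^sub>m 1\<^sub>m n) = (x::'a::comm_ring_1)^n"
  by (simp add: det_smult)

lemma sylvester_point:
  fixes C B :: "'a :: field mat"
  assumes C: "C \<in> carrier_mat n2 n1" and B: "B \<in> carrier_mat n1 n2" and x: "x \<noteq> 0"
  shows "x^n1 * det (x \<cdot>\<^sub>m 1\<^sub>m n2 - C * B) = x^n2 * det (x \<cdot>\<^sub>m 1\<^sub>m n1 - B * C)"
proof -
  define K0 where "K0 = four_block_mat (x \<cdot>\<^sub>m 1\<^sub>m n2) C B (1\<^sub>m n1)"
  define L1 where "L1 = four_block_mat (1\<^sub>m n2) (-C) (0\<^sub>m n1 n2) (x \<cdot>\<^sub>m 1\<^sub>m n1)"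
  define L2 where "L2 = four_block_mat (x \<cdot>\<^sub>m 1\<^sub>m n2) (0\<^sub>m n2 n1) (-B) (x \<cdot>\<^sub>m 1\<^sub>m n1)"
  have K0: "K0 \<in> carrier_mat (n2+n1) (n2+n1)" unfolding K0_def using C B by auto
  have L1: "L1 \<in> carrier_mat (n2+n1) (n2+n1)" unfolding L1_def using C B by auto
  have L2: "L2 \<in> carrier_mat (n2+n1) (n2+n1)" unfolding L2_def using C B by auto
  have CB: "C * B \<in> carrier_mat n2 n2" and BC: "B * C \<in> carrier_mat n1 n1" using C B by auto
  have e1: "L1 * K0 = four_block_mat (x \<cdot>\<^sub>m 1\<^sub>m n2 - C * B) (0\<^sub>m n2 n1) (x \<cdot>\<^sub>m B) (x \<cdot>\<^sub>m 1\<^sub>m n1)"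
    unfolding L1_def K0_def
    apply (subst mult_four_block_mat[OF one_carrier_mat _ zero_carrier_mat smult_carrier_mat[OF one_carrier_mat]
       smult_carrier_mat[OF one_carrier_mat] C B one_carrier_mat])
    using C apply simp
    apply (rule cong_four_block_mat)
    using C B CB
    by (auto simp: mult_smult_distrib mult_smult_assoc_mat uminus_mult_left_mat minus_add_uminus_mat)
  have d1: "det L1 * det K0 = x^n1 * det (x \<cdot>\<^sub>m 1\<^sub>m n2 - C * B)"
    unfolding det_mult[OF L1 K0, symmetric] e1
    by (subst det_four_block_mat_upper_right_zero[of _ n2 _ n1]) (use C B CB in \<open>auto simp: det_smult_one\<close>)
  have dL1: "det L1 = x^n1" unfolding L1_def
    by (subst det_four_block_mat_lower_left_zero[of _ n2 _ n1]) (use C in \<open>auto simp: det_smult_one\<close>)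
  have e2: "L2 * K0 = four_block_mat ((x*x) \<cdot>\<^sub>m 1\<^sub>m n2) (x \<cdot>\<^sub>m C) (0\<^sub>m n1 n2) (x \<cdot>\<^sub>m 1\<^sub>m n1 - B * C)"
    unfolding L2_def K0_def
    apply (subst mult_four_block_mat[OF smult_carrier_mat[OF one_carrier_mat] zero_carrier_mat _ smult_carrier_mat[OF one_carrier_mat]
       smult_carrier_mat[OF one_carrier_mat] C B one_carrier_mat])
    using B apply simp
    apply (rule cong_four_block_mat)
    using C B BC
    by (auto simp: mult_smult_distrib mult_smult_assoc_mat uminus_mult_left_mat minus_add_uminus_mat)
  have d2: "det L2 * det K0 = (x*x)^n2 * det (x \<cdot>\<^sub>m 1\<^sub>m n1 - B * C)"
    unfolding det_mult[OF L2 K0, symmetric] e2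
    by (subst det_four_block_mat_lower_left_zero[of _ n2 _ n1]) (use C B BC in \<open>auto simp: det_smult_one\<close>)
  have dL2: "det L2 = x^n2 * x^n1" unfolding L2_def
    by (subst det_four_block_mat_upper_right_zero[of _ n2 _ n1]) (use B in \<open>auto simp: det_smult_one\<close>)
  from d1 dL1 x have dK0: "det K0 = det (x \<cdot>\<^sub>m 1\<^sub>m n2 - C * B)" by simp
  from d2 dL2 dK0 have "x^n2 * (x^n1 * det (x \<cdot>\<^sub>m 1\<^sub>m n2 - C * B)) = x^n2 * (x^n2 * det (x \<cdot>\<^sub>m 1\<^sub>m n1 - B * C))"
    by (simp add: power_mult_distrib ac_simps)
  thus ?thesis using x by simp
qed

lemma sylvester_charpoly:
  fixes C B :: "real mat"
  assumes C: "C \<in> carrier_mat n2 n1" and B: "B \<in> carrier_mat n1 n2"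
  shows "monom 1 n1 * char_poly (C * B) = monom 1 n2 * char_poly (B * C)"
proof -
  let ?p = "monom 1 n1 * char_poly (C * B) - monom 1 n2 * char_poly (B * C)"
  have CB: "C * B \<in> carrier_mat n2 n2" and BC: "B * C \<in> carrier_mat n1 n1" using C B by auto
  have cp: "poly (char_poly A) x = det (x \<cdot>\<^sub>m 1\<^sub>m n - A)" if A: "A \<in> carrier_mat n n" for A :: "real mat" and x n
  proof -
    have "- char_matrix A x = x \<cdot>\<^sub>m 1\<^sub>m n - A" unfolding char_matrix_def using A by (intro eq_matI) auto
    thus ?thesis using char_poly_matrix[OF A] by simp
  qed
  have roots: "poly ?p x = 0" if "x \<noteq> 0" for x
    using sylvester_point[OF C B that] cp[OF CB] cp[OF BC] by (simp add: poly_monom)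
  show ?thesis
  proof (rule ccontr)
    assume "\<not> ?thesis"
    hence "?p \<noteq> 0" by simp
    from poly_roots_finite[OF this] have fin: "finite {x. poly ?p x = 0}" .
    have "UNIV - {0} \<subseteq> {x. poly ?p x = 0}" using roots by auto
    hence "finite (UNIV - {0::real})" using fin finite_subset by blast
    thus False using infinite_UNIV_char_0 by auto
  qed
qed

context vec_space
begin

lemma rank_inj:
  assumes A: "A \<in> carrier_mat n nc" and r: "rank A = nc" and v: "v \<in> carrier_vec nc"
    and Av: "A *\<^sub>v v = 0\<^sub>v n"
  shows "v = 0\<^sub>v nc"
proof -
  have dist: "distinct (cols A)"
  proof (rule ccontr)
    assume nd: "\<not> distinct (cols A)"
    obtain S where S: "maximal S (\<lambda>T. T \<subseteq> set (cols A) \<and> lin_indpt T)"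
      using maximal_exists[of "(\<lambda>T. T \<subseteq> set (cols A) \<and> lin_indpt T)" "card (set (cols A))" "{}"]
      by (meson List.finite_set card_mono empty_iff empty_subsetI finite_lin_indpt2 rev_finite_subset)
    then have "card S \<le> card (set (cols A))" by (simp add: card_mono maximal_def)
    also have "card (set (cols A)) < length (cols A)"
      using nd by (metis card_distinct card_length le_neq_implies_less)
    also have "length (cols A) = nc" using A by simp
    finally have "card S < nc" .
    with rank_card_indpt[OF A S] r show False by simp
  qed
  have li: "lin_indpt (set (cols A))" using full_rank_lin_indpt[OF A r dist] .
  show ?thesis
  proof (rule ccontr)
    assume "v \<noteq> 0\<^sub>v nc"
    from lin_depI[OF A v this Av dist] li show False by simp
  qed
qed

lemma rank_inj_transpose:
  fixes A :: "'a mat"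
  assumes A: "A \<in> carrier_mat n nc" and r: "rank A = n" and y: "y \<in> carrier_vec n"
    and Ay: "A\<^sup>T *\<^sub>v y = 0\<^sub>v nc"
  shows "\<exists>x\<in>carrier_vec nc. y = A *\<^sub>v x"
proof -
  obtain S where S: "maximal S (\<lambda>T. T \<subseteq> set (cols A) \<and> lin_indpt T)"
    using maximal_exists[of "(\<lambda>T. T \<subseteq> set (cols A) \<and> lin_indpt T)" "card (set (cols A))" "{}"]
    by (meson List.finite_set card_mono empty_iff empty_subsetI finite_lin_indpt2 rev_finite_subset)
  have cS: "card S = n" using rank_card_indpt[OF A S] r by simp
  have Ssub: "S \<subseteq> set (cols A)" and liS: "lin_indpt S" using S unfolding maximal_def by auto
  have Scar: "S \<subseteq> carrier_vec n" using Ssub A cols_dim by blast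
  have finS: "finite S" using Ssub finite_subset by blast
  have "basis S" by (rule dim_li_is_basis) (use finS Scar liS cS dim_is_n in auto)
  hence spS: "span S = carrier_vec n" unfolding basis_def by auto
  have "span S \<subseteq> span (set (cols A))" by (rule span_is_monotone[OF Ssub])
  hence "y \<in> col_space A" unfolding col_space_def using spS y by auto
  thus ?thesis unfolding col_space_eq[OF A] using A by auto
qed

end

lemma rank_row_inj:
  fixes A :: "real mat"
  assumes A: "A \<in> carrier_mat n nc" and r: "vec_space.rank n A = n" and y: "y \<in> carrier_vec n"
    and Ay: "A\<^sup>T *\<^sub>v y = 0\<^sub>v nc"
  shows "y = 0\<^sub>v n"
proof -
  obtain x where x: "x \<in> carrier_vec nc" "y = A *\<^sub>v x"
    using vec_space.rank_inj_transpose[OF A r y Ay] by auto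
  have "y \<bullet> y = y \<bullet> (A *\<^sub>v x)" using x by simp
  also have "\<dots> = (A\<^sup>T *\<^sub>v y) \<bullet> x" using transpose_vec_mult_scalar[OF A x(1) y] by simp
  also have "\<dots> = 0" using Ay x by simp
  finally have "y \<bullet> y = 0" .
  hence "y \<bullet>c y = 0" by simp
  thus ?thesis using conjugate_square_eq_0_vec[OF y] by simp
qed


lemma sorted_split:
  fixes P :: "real list"
  assumes pos: "\<forall>p\<in>set P. p > 0" and len: "length P = r" and r: "r \<ge> 1"
    and R: "R = replicate_mset z 0 + mset P"
  defines "L \<equiv> rev (sorted_list_of_multiset R)"
  shows "L ! 0 \<in> set P" "L ! (r-1) \<in> set P" "\<forall>p\<in>set P. L!(r-1) \<le> p \<and> p \<le> L!0"
    "\<forall>t\<in>#R. t = 0 \<or> t \<in> set P"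
proof -
  define Q where "Q = sort P"
  have sQ: "sorted Q" and mQ: "mset Q = mset P" and lQ: "length Q = r" and setQ: "set Q = set P"
    unfolding Q_def using len by auto
  have "sorted (replicate z 0 @ Q)"
    using sQ pos setQ by (auto simp: sorted_append less_imp_le)
  moreover have "mset (replicate z 0 @ Q) = R" unfolding R using mQ by simp
  ultimately have "sorted_list_of_multiset R = replicate z 0 @ Q"
    by (metis sorted_list_of_multiset_mset sorted_sort_id)
  hence L: "L = rev Q @ replicate z 0" unfolding L_def by simp
  have i: "L ! i = Q ! (r - 1 - i)" if "i < r" for i
    unfolding L using that lQ by (simp add: nth_append rev_nth)
  have L0: "L ! 0 = Q ! (r-1)" using i[of 0] r by simp
  have Lr: "L ! (r-1) = Q ! 0" using i[of "r-1"] r by simp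
  show "L ! 0 \<in> set P" unfolding L0 setQ[symmetric] using lQ r by simp
  show "L ! (r-1) \<in> set P" unfolding Lr setQ[symmetric] using lQ r by simp
  show "\<forall>p\<in>set P. L!(r-1) \<le> p \<and> p \<le> L!0"
  proof
    fix p assume "p \<in> set P"
    then obtain k where k: "k < r" "p = Q ! k" unfolding setQ[symmetric] using lQ by (metis in_set_conv_nth)
    show "L!(r-1) \<le> p \<and> p \<le> L!0" unfolding L0 Lr k(2)
      using sorted_nth_mono[OF sQ, of 0 k] sorted_nth_mono[OF sQ, of k "r-1"] k(1) lQ by auto
  qed
  show "\<forall>t\<in>#R. t = 0 \<or> t \<in> set P" unfolding R by auto
qed

lemma proots_linprod: "proots (\<Prod>r\<leftarrow>rs. [:-r, 1:]) = mset (rs :: real list)"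
proof (induction rs)
  case (Cons a rs)
  have nz: "(\<Prod>r\<leftarrow>rs. [:-r, 1:]) \<noteq> 0" by (auto simp: prod_list_zero_iff)
  have nz2: "[:-a, 1:] \<noteq> 0" by simp
  have "proots (\<Prod>r\<leftarrow>a#rs. [:-r, 1:]) = proots [:-a, 1:] + proots (\<Prod>r\<leftarrow>rs. [:-r, 1:])"
    using proots_mult[OF nz2 nz] by simp
  also have "proots [:-a, 1:] = {#a#}" using proots_linear_factor[of "-a"] by simp
  finally show ?case using Cons by simp
qed simp

lemma proots_monom: "proots (monom (1::real) n) = replicate_mset n 0"
proof -
  have "monom (1::real) n = [:-0, 1:]^n" by (simp add: monom_altdef)
  thus ?thesis by (simp only: proots_power proots_linear_factor) simp
qed


lemma char_poly_nz: "A \<in> carrier_mat n n \<Longrightarrow> char_poly A \<noteq> 0"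
  using degree_monic_char_poly[of A n] by auto

lemma real_sq_zero: "(w :: real vec) \<in> carrier_vec n \<Longrightarrow> w \<bullet> w = 0 \<Longrightarrow> w = 0\<^sub>v n"
proof -
  assume w: "w \<in> carrier_vec n" and "w \<bullet> w = 0"
  hence "w \<bullet>c w = 0" by simp
  thus ?thesis using conjugate_square_eq_0_vec[OF w] by simp
qed

lemma gram_pos:
  fixes B :: "real mat"
  assumes B: "B \<in> carrier_mat k l" and inj: "\<forall>u\<in>carrier_vec k. B\<^sup>T *\<^sub>v u = 0\<^sub>v l \<longrightarrow> u = 0\<^sub>v k"
    and root: "poly (char_poly (B * B\<^sup>T)) t = 0"
  shows "t \<noteq> 0"
proof
  assume t0: "t = 0"
  have G: "B * B\<^sup>T \<in> carrier_mat k k" using B by auto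
  have "eigenvalue (B * B\<^sup>T) 0" using root t0 eigenvalue_root_char_poly[OF G] by simp
  then obtain u where u: "u \<in> carrier_vec k" "u \<noteq> 0\<^sub>v k" "(B * B\<^sup>T) *\<^sub>v u = 0 \<cdot>\<^sub>v u"
    unfolding eigenvalue_def eigenvector_def using G by auto
  have BT: "B\<^sup>T \<in> carrier_mat l k" using B by auto
  have w: "B\<^sup>T *\<^sub>v u \<in> carrier_vec l" using BT u by auto
  have "B *\<^sub>v (B\<^sup>T *\<^sub>v u) = 0\<^sub>v k" using u(3) B u(1) by (subst assoc_mult_mat_vec[symmetric]) auto
  hence "u \<bullet> (B *\<^sub>v (B\<^sup>T *\<^sub>v u)) = 0" using u by simp
  hence "(B\<^sup>T *\<^sub>v u) \<bullet> (B\<^sup>T *\<^sub>v u) = 0" using transpose_vec_mult_scalar[OF B w u(1)] by simp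
  hence "B\<^sup>T *\<^sub>v u = 0\<^sub>v l" using real_sq_zero[OF w] by simp
  with inj u show False by auto
qed

lemma roots_decomp:
  fixes C :: "real mat"
  assumes C: "C \<in> carrier_mat n2 n1" and rk: "vec_space.rank n2 C = min n1 n2"
  shows "\<exists>P. proots (char_poly (C * C\<^sup>T)) = replicate_mset (n2 - min n1 n2) 0 + mset P \<and>
     length P = min n1 n2 \<and> (\<forall>p\<in>set P. p > 0)"
proof (cases "n1 \<le> n2")
  case True
  have CT: "C\<^sup>T \<in> carrier_mat n1 n2" using C by auto
  have injC: "\<forall>u\<in>carrier_vec n1. C\<^sup>T\<^sup>T *\<^sub>v u = 0\<^sub>v n2 \<longrightarrow> u = 0\<^sub>v n1"
    using vec_space.rank_inj[OF C] rk True by auto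
  from gram_split[OF CT] obtain rs where
    rs: "char_poly (C\<^sup>T * C\<^sup>T\<^sup>T) = (\<Prod>r\<leftarrow>rs. [:-r, 1:])" "length rs = n1" "\<forall>r\<in>set rs. r \<ge> 0" by auto
  have pos: "\<forall>p\<in>set rs. p > 0"
  proof
    fix p assume p: "p \<in> set rs"
    have "poly (char_poly (C\<^sup>T * C\<^sup>T\<^sup>T)) p = 0" unfolding rs(1) using p
      by (simp add: poly_prod_list prod_list_zero_iff)
    from gram_pos[OF CT injC this] rs(3) p show "p > 0" by force
  qed
  have syl: "monom 1 n1 * char_poly (C * C\<^sup>T) = monom 1 n2 * char_poly (C\<^sup>T * C)"
    by (rule sylvester_charpoly[OF C CT])
  have nz1: "char_poly (C * C\<^sup>T) \<noteq> 0" and nz2: "char_poly (C\<^sup>T * C) \<noteq> 0"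
    using C by (auto intro!: char_poly_nz)
  have m0: "monom (1::real) k \<noteq> 0" for k by simp
  have "replicate_mset n1 0 + proots (char_poly (C * C\<^sup>T)) = replicate_mset n2 0 + mset rs"
    using arg_cong[OF syl, of proots] rs(1)
    unfolding proots_mult[OF m0 nz1] proots_mult[OF m0 nz2] proots_monom by (simp add: proots_linprod)
  also have "replicate_mset n2 (0::real) = replicate_mset n1 0 + replicate_mset (n2 - n1) 0"
    using True by (intro multiset_eqI) auto
  finally have "proots (char_poly (C * C\<^sup>T)) = replicate_mset (n2 - n1) 0 + mset rs"
    by (simp add: add.assoc)
  thus ?thesis using True rs(2) pos by (intro exI[of _ rs]) auto
next
  case False
  have injC: "\<forall>u\<in>carrier_vec n2. C\<^sup>T *\<^sub>v u = 0\<^sub>v n1 \<longrightarrow> u = 0\<^sub>v n2"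
    using rank_row_inj[OF C] rk False by auto
  from gram_split[OF C] obtain rs where
    rs: "char_poly (C * C\<^sup>T) = (\<Prod>r\<leftarrow>rs. [:-r, 1:])" "length rs = n2" "\<forall>r\<in>set rs. r \<ge> 0" by auto
  have pos: "\<forall>p\<in>set rs. p > 0"
  proof
    fix p assume p: "p \<in> set rs"
    have "poly (char_poly (C * C\<^sup>T)) p = 0" unfolding rs(1) using p
      by (simp add: poly_prod_list prod_list_zero_iff)
    from gram_pos[OF C injC this] rs(3) p show "p > 0" by force
  qed
  show ?thesis using False rs pos by (intro exI[of _ rs]) (auto simp: proots_linprod)
qed


lemma hcat_carrier: "A1 \<in> carrier_mat m n1 \<Longrightarrow> A2 \<in> carrier_mat m n2 \<Longrightarrow> hcat A1 A2 \<in> carrier_mat m (n1+n2)"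
  unfolding hcat_def by auto

lemma hcat_mult:
  assumes A1: "A1 \<in> carrier_mat m n1" and A2: "A2 \<in> carrier_mat m n2"
    and x: "x \<in> carrier_vec n1" and y: "y \<in> carrier_vec n2"
  shows "hcat A1 A2 *\<^sub>v (x @\<^sub>v y) = A1 *\<^sub>v x + A2 *\<^sub>v y"
proof (rule eq_vecI)
  fix i assume "i < dim_vec (A1 *\<^sub>v x + A2 *\<^sub>v y)"
  hence i: "i < m" using A1 A2 by simp
  have r: "row (hcat A1 A2) i = row A1 i @\<^sub>v row A2 i"
    by (rule eq_vecI) (use i A1 A2 in \<open>auto simp: hcat_def\<close>)
  have "(hcat A1 A2 *\<^sub>v (x @\<^sub>v y)) $ i = row (hcat A1 A2) i \<bullet> (x @\<^sub>v y)"
    using i A1 unfolding hcat_def by simp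
  also have "\<dots> = row A1 i \<bullet> x + row A2 i \<bullet> y" unfolding r
    by (rule scalar_prod_append) (use A1 A2 x y i in auto)
  finally show "(hcat A1 A2 *\<^sub>v (x @\<^sub>v y)) $ i = (A1 *\<^sub>v x + A2 *\<^sub>v y) $ i" using i A1 A2 by simp
qed (use A1 A2 in \<open>auto simp: hcat_def\<close>)

lemma eig_lt1:
  fixes A1 A2 :: "real mat"
  assumes A1: "A1 \<in> carrier_mat m n1" and A2: "A2 \<in> carrier_mat m n2"
    and fullrank: "vec_space.rank m (hcat A1 A2) = n1 + n2"
    and orth1: "A1\<^sup>T * A1 = 1\<^sub>m n1" and orth2: "A2\<^sup>T * A2 = 1\<^sub>m n2"
    and u: "u \<in> carrier_vec n2" "u \<noteq> 0\<^sub>v n2"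
    and ev: "((A2\<^sup>T * A1) * (A2\<^sup>T * A1)\<^sup>T) *\<^sub>v u = t \<cdot>\<^sub>v u"
  shows "t < 1"
proof (rule ccontr)
  assume "\<not> t < 1" hence t1: "t \<ge> 1" by simp
  define C where "C = A2\<^sup>T * A1"
  have C: "C \<in> carrier_mat n2 n1" unfolding C_def using A1 A2 by auto
  have CT: "C\<^sup>T = A1\<^sup>T * A2" unfolding C_def using transpose_mult[of "A2\<^sup>T" n2 m A1 n1] A1 A2 by simp
  define w where "w = A2 *\<^sub>v u"
  define p where "p = A1\<^sup>T *\<^sub>v w"
  define q where "q = A1 *\<^sub>v p"
  have w: "w \<in> carrier_vec m" and p: "p \<in> carrier_vec n1" and q: "q \<in> carrier_vec m"
    unfolding w_def p_def q_def using A1 A2 u by auto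
  have pCu: "C\<^sup>T *\<^sub>v u = p" unfolding CT p_def w_def using A1 A2 u by simp
  have "C *\<^sub>v p = t \<cdot>\<^sub>v u" using ev unfolding C_def[symmetric] pCu[symmetric]
    using C u by (subst assoc_mult_mat_vec[symmetric]) auto
  hence "u \<bullet> (C *\<^sub>v p) = t * (u \<bullet> u)" using u by simp
  moreover have "u \<bullet> (C *\<^sub>v p) = p \<bullet> p" using transpose_vec_mult_scalar[OF C p u(1)] pCu by simp
  ultimately have pp: "p \<bullet> p = t * (u \<bullet> u)" by simp
  have ww: "w \<bullet> w = u \<bullet> u"
  proof -
    have "w \<bullet> w = (A2\<^sup>T *\<^sub>v w) \<bullet> u" unfolding w_def using transpose_vec_mult_scalar[OF A2 u(1) w] w_def by simp
    also have "A2\<^sup>T *\<^sub>v w = u" unfolding w_def using A2 u orth2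
      by (subst assoc_mult_mat_vec[symmetric]) auto
    finally show ?thesis .
  qed
  have qq: "q \<bullet> q = p \<bullet> p"
  proof -
    have "q \<bullet> q = (A1\<^sup>T *\<^sub>v q) \<bullet> p" unfolding q_def using transpose_vec_mult_scalar[OF A1 p q] q_def by simp
    also have "A1\<^sup>T *\<^sub>v q = p" unfolding q_def using A1 p orth1
      by (subst assoc_mult_mat_vec[symmetric]) auto
    finally show ?thesis .
  qed
  have wq: "w \<bullet> q = p \<bullet> p"
    unfolding q_def using transpose_vec_mult_scalar[OF A1 p w] p_def by simp
  have qw: "q \<bullet> w = p \<bullet> p" using wq comm_scalar_prod[OF w q] by simp
  have "(w - q) \<bullet> (w - q) = w \<bullet> w - w \<bullet> q - (q \<bullet> w - q \<bullet> q)"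
    using w q by (simp add: minus_scalar_prod_distrib[of _ m] scalar_prod_minus_distrib[of _ m])
  also have "\<dots> = u \<bullet> u - p \<bullet> p" using ww wq qw qq by simp
  also have "\<dots> = (1 - t) * (u \<bullet> u)" using pp by (simp add: algebra_simps)
  finally have e: "(w - q) \<bullet> (w - q) = (1 - t) * (u \<bullet> u)" .
  have uu: "u \<bullet> u \<ge> 0" using conjugate_square_ge_0_vec[of u] by simp
  have ge: "(w - q) \<bullet> (w - q) \<ge> 0" using conjugate_square_ge_0_vec[of "w - q"] by simp
  have "(1 - t) * (u \<bullet> u) \<le> 0" using t1 uu by (simp add: mult_nonpos_nonneg)
  hence "(w - q) \<bullet> (w - q) = 0" using e ge by simp
  hence wq0: "w - q = 0\<^sub>v m" using real_sq_zero[of "w - q" m] w q by simp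
  have "hcat A1 A2 *\<^sub>v ((-p) @\<^sub>v u) = A1 *\<^sub>v (-p) + A2 *\<^sub>v u"
    by (rule hcat_mult[OF A1 A2]) (use p u in auto)
  also have "\<dots> = w - q" unfolding w_def q_def using A1 A2 p u
    by (intro eq_vecI) auto
  finally have "hcat A1 A2 *\<^sub>v ((-p) @\<^sub>v u) = 0\<^sub>v m" using wq0 by simp
  from vec_space.rank_inj[OF hcat_carrier[OF A1 A2] fullrank _ this]
  have "(-p) @\<^sub>v u = 0\<^sub>v (n1+n2)" using p u by auto
  hence z: "((-p) @\<^sub>v u) $ (n1 + j) = 0" if "j < n2" for j using that by simp
  have "u = 0\<^sub>v n2"
  proof (rule eq_vecI)
    fix j assume "j < dim_vec (0\<^sub>v n2 :: real vec)"
    hence j: "j < n2" by simp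
    have "((-p) @\<^sub>v u) $ (n1 + j) = u $ j" using p u j by simp
    thus "u $ j = 0\<^sub>v n2 $ j" using z[OF j] j by simp
  qed (use u in auto)
  with u(2) show False by simp
qed


lemma iterMc_carrier: "C \<in> carrier_mat n2 n1 \<Longrightarrow> iterMc n1 n2 C g1 g2 \<in> carrier_mat (n1+n2) (n1+n2)"
  unfolding iterMc_def by (rule four_block_carrier_mat) auto

lemma LB_eig:
  fixes Cc :: "complex mat"
  assumes C: "Cc \<in> carrier_mat n2 n1" and uc: "uc \<in> carrier_vec n2"
    and ev: "Cc *\<^sub>v (Cc\<^sup>T *\<^sub>v uc) = lam \<cdot>\<^sub>v uc" and pnz: "Cc\<^sup>T *\<^sub>v uc \<noteq> 0\<^sub>v n1"
    and G1: "G1 \<noteq> 0" and quad: "(z-1+G1)*(z-1+G2) = G1*G2*lam*z"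
  shows "eigenvalue (iterMc n1 n2 Cc G1 G2) z"
proof -
  define p where "p = Cc\<^sup>T *\<^sub>v uc"
  have p: "p \<in> carrier_vec n1" unfolding p_def using C uc by auto
  define x where "x = G1 \<cdot>\<^sub>v p"
  define y where "y = (1-G1-z) \<cdot>\<^sub>v uc"
  have x: "x \<in> carrier_vec n1" and y: "y \<in> carrier_vec n2" unfolding x_def y_def using p uc by auto
  have CTy: "Cc\<^sup>T *\<^sub>v y = (1-G1-z) \<cdot>\<^sub>v p" unfolding y_def p_def using C uc by (simp add: mult_mat_vec)
  have Cp: "Cc *\<^sub>v p = lam \<cdot>\<^sub>v uc" using ev unfolding p_def .
  have Cx: "Cc *\<^sub>v x = (G1 * lam) \<cdot>\<^sub>v uc" unfolding x_def using C p uc Cp by (simp add: mult_mat_vec smult_smult_assoc)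
  have CCy: "Cc *\<^sub>v (Cc\<^sup>T *\<^sub>v y) = ((1-G1-z) * lam) \<cdot>\<^sub>v uc"
    unfolding CTy using C p uc Cp by (simp add: mult_mat_vec smult_smult_assoc)
  have "iterMc n1 n2 Cc G1 G2 *\<^sub>v (x @\<^sub>v y) = z \<cdot>\<^sub>v (x @\<^sub>v y)"
  proof (subst iterMc_eig[OF C x y], intro conjI allI impI)
    fix j assume j: "j < n1"
    show "(1-G1) * x$j - G1 * (Cc\<^sup>T *\<^sub>v y)$j = z * x$j"
      unfolding CTy x_def using j p by (simp add: algebra_simps)
  next
    fix i assume i: "i < n2"
    have "-(G2*(1-G1)) * (G1 * lam) + (1-G2) * (1-G1-z) + G1*G2 * ((1-G1-z) * lam) = z * (1-G1-z)"
    proof -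
      have "-(G2*(1-G1)) * (G1 * lam) + (1-G2) * (1-G1-z) + G1*G2 * ((1-G1-z) * lam) - z * (1-G1-z)
          = (z-1+G1)*(z-1+G2) - G1*G2*lam*z" by (simp add: algebra_simps)
      thus ?thesis using quad by simp
    qed
    hence "(-(G2*(1-G1)) * (G1 * lam) + (1-G2) * (1-G1-z) + G1*G2 * ((1-G1-z) * lam)) * uc$i = z * (1-G1-z) * uc$i"
      by simp
    thus "-(G2*(1-G1)) * (Cc *\<^sub>v x)$i + (1-G2) * y$i + G1*G2 * (Cc *\<^sub>v (Cc\<^sup>T *\<^sub>v y))$i = z * y$i"
      unfolding Cx CCy using i uc by (simp add: y_def algebra_simps)
  qed
  moreover have "x @\<^sub>v y \<noteq> 0\<^sub>v (n1+n2)"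
  proof
    assume h: "x @\<^sub>v y = 0\<^sub>v (n1+n2)"
    have "p = 0\<^sub>v n1"
    proof (rule eq_vecI)
      fix j assume "j < dim_vec (0\<^sub>v n1 :: complex vec)"
      hence j: "j < n1" by simp
      have "(x @\<^sub>v y) $ j = x $ j" using x y j by simp
      hence "G1 * p$j = 0" using h j p unfolding x_def by simp
      thus "p $ j = 0\<^sub>v n1 $ j" using G1 j by simp
    qed (use p in auto)
    with pnz show False unfolding p_def by simp
  qed
  ultimately show ?thesis unfolding eigenvalue_def eigenvector_def using x y C
    by (intro exI[of _ "x @\<^sub>v y"]) (auto simp: iterMc_def)
qed

lemma cinj:
  fixes B :: "real mat"
  assumes B: "B \<in> carrier_mat k l" and inj: "\<forall>u\<in>carrier_vec k. B\<^sup>T *\<^sub>v u = 0\<^sub>v l \<longrightarrow> u = 0\<^sub>v k"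
    and y: "y \<in> carrier_vec k" and eq: "cmat B *\<^sub>v ((cmat B)\<^sup>T *\<^sub>v y) = 0\<^sub>v k"
  shows "y = 0\<^sub>v k"
proof (rule ccontr)
  assume ynz: "y \<noteq> 0\<^sub>v k"
  have G: "B * B\<^sup>T \<in> carrier_mat k k" using B by auto
  have "cmat (B * B\<^sup>T) *\<^sub>v y = 0 \<cdot>\<^sub>v y"
    unfolding cmat_gram[OF B] using eq B y by (subst assoc_mult_mat_vec) auto
  hence "eigenvalue (cmat (B * B\<^sup>T)) 0" unfolding eigenvalue_def eigenvector_def using y ynz G B by auto
  from gram_eigenvalue[OF B this] obtain t where "0 = complex_of_real t" "poly (char_poly (B * B\<^sup>T)) t = 0" by auto
  hence "poly (char_poly (B * B\<^sup>T)) 0 = 0" by simp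
  from gram_pos[OF B inj this] show False by simp
qed

lemma rho_iterM: "C \<in> carrier_mat n2 n1 \<Longrightarrow>
  rho (iterM n1 n2 C g1 g2) = spectral_radius (iterMc n1 n2 (cmat C) (complex_of_real g1) (complex_of_real g2))"
  unfolding rho_def by (simp add: iterM_map)


lemma LBt:
  fixes C :: "real mat"
  assumes C: "C \<in> carrier_mat n2 n1" and u: "u \<in> carrier_vec n2" "u \<noteq> 0\<^sub>v n2"
    and ev: "(C * C\<^sup>T) *\<^sub>v u = t \<cdot>\<^sub>v u" and t0: "t > 0" and g1: "g1 \<ge> 1" and g2: "g2 \<ge> 1"
    and z: "z^2 - complex_of_real ((g1-1)*(g2-1) + 1 - g1*g2*(1-t)) * z + complex_of_real ((g1-1)*(g2-1)) = 0"
  shows "cmod z \<le> rho (iterM n1 n2 C g1 g2)"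
proof -
  define Cc where "Cc = cmat C"
  have Cc: "Cc \<in> carrier_mat n2 n1" unfolding Cc_def using C by auto
  define uc where "uc = map_vec complex_of_real u"
  have uc: "uc \<in> carrier_vec n2" unfolding uc_def using u by auto
  have ucnz: "uc \<noteq> 0\<^sub>v n2" unfolding uc_def using u(2) by simp
  have G: "C * C\<^sup>T \<in> carrier_mat n2 n2" using C by auto
  have "cmat (C * C\<^sup>T) *\<^sub>v uc = complex_of_real t \<cdot>\<^sub>v uc"
    unfolding uc_def of_real_hom.mult_mat_vec_hom[OF G u(1), symmetric] ev of_real_hom.vec_hom_smult ..
  hence ev2: "Cc *\<^sub>v (Cc\<^sup>T *\<^sub>v uc) = complex_of_real t \<cdot>\<^sub>v uc"
    unfolding cmat_gram[OF C] Cc_def[symmetric] using Cc uc by (subst assoc_mult_mat_vec[symmetric]) auto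
  have pnz: "Cc\<^sup>T *\<^sub>v uc \<noteq> 0\<^sub>v n1"
  proof
    assume "Cc\<^sup>T *\<^sub>v uc = 0\<^sub>v n1"
    hence "complex_of_real t \<cdot>\<^sub>v uc = 0\<^sub>v n2" using ev2 Cc by simp
    hence "uc = 0\<^sub>v n2"
    proof (intro eq_vecI)
      fix i assume h: "complex_of_real t \<cdot>\<^sub>v uc = 0\<^sub>v n2" and "i < dim_vec (0\<^sub>v n2 :: complex vec)"
      hence i: "i < n2" by simp
      from arg_cong[OF h, of "\<lambda>v. v$i"] i uc have "complex_of_real t * uc$i = 0" by simp
      thus "uc $ i = 0\<^sub>v n2 $ i" using t0 i by simp
    qed (use uc in auto)
    with ucnz show False by simp
  qed
  define G1 where "G1 = complex_of_real g1"
  define G2 where "G2 = complex_of_real g2"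
  have G1: "G1 \<noteq> 0" unfolding G1_def using g1 by simp
  have quad: "(z-1+G1)*(z-1+G2) = G1*G2*complex_of_real t*z"
  proof -
    have "(z-1+G1)*(z-1+G2) - G1*G2*complex_of_real t*z =
       z^2 - complex_of_real ((g1-1)*(g2-1) + 1 - g1*g2*(1-t)) * z + complex_of_real ((g1-1)*(g2-1))"
      unfolding G1_def G2_def by (simp add: power2_eq_square algebra_simps)
    thus ?thesis using z by simp
  qed
  have "eigenvalue (iterMc n1 n2 Cc G1 G2) z" by (rule LB_eig[OF Cc uc ev2 pnz G1 quad])
  hence "z \<in> spectrum (iterMc n1 n2 Cc G1 G2)" unfolding spectrum_def by simp
  moreover have "n1 + n2 > 0" using u by (cases n2) auto
  ultimately have "cmod z \<le> spectral_radius (iterMc n1 n2 Cc G1 G2)"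
    using spectral_radius_mem_max(2)[OF iterMc_carrier[OF Cc]] by auto
  thus ?thesis unfolding rho_iterM[OF C] G1_def G2_def Cc_def .
qed

lemma UBrho:
  fixes C :: "real mat" and g1 g2 v lr l1 :: real
  assumes C: "C \<in> carrier_mat n2 n1" and n: "n1 + n2 > 0"
    and g1: "g1 \<ge> 1" and g2: "g2 \<ge> 1" and v0: "v \<ge> 0" and d: "(g1-1)*(g2-1) = v^2"
    and quad: "\<And>t. lr \<le> t \<Longrightarrow> t \<le> l1 \<Longrightarrow> (v^2 + 1 - g1*g2*(1-t))^2 \<le> 4*v^2"
    and Heig: "\<And>lam y. y \<in> carrier_vec n2 \<Longrightarrow> y \<noteq> 0\<^sub>v n2 \<Longrightarrow> cmat C *\<^sub>v ((cmat C)\<^sup>T *\<^sub>v y) = lam \<cdot>\<^sub>v y \<Longrightarrow>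
        lam = 0 \<or> (\<exists>t. lam = complex_of_real t \<and> lr \<le> t \<and> t \<le> l1)"
    and Hcase: "((\<forall>x\<in>carrier_vec n1. (cmat C)\<^sup>T *\<^sub>v (cmat C *\<^sub>v x) = 0\<^sub>v n1 \<longrightarrow> x = 0\<^sub>v n1) \<and> \<bar>1-g2\<bar> \<le> v) \<or>
       ((\<forall>y\<in>carrier_vec n2. cmat C *\<^sub>v ((cmat C)\<^sup>T *\<^sub>v y) = 0\<^sub>v n2 \<longrightarrow> y = 0\<^sub>v n2) \<and> \<bar>1-g1\<bar> \<le> v)"
  shows "rho (iterM n1 n2 C g1 g2) \<le> v"
proof -
  define M where "M = iterMc n1 n2 (cmat C) (complex_of_real g1) (complex_of_real g2)"
  have Cc: "cmat C \<in> carrier_mat n2 n1" using C by auto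
  have M: "M \<in> carrier_mat (n1+n2) (n1+n2)" unfolding M_def by (rule iterMc_carrier[OF Cc])
  from spectral_radius_mem_max(1)[OF M n] obtain z where
    z: "z \<in> spectrum M" "spectral_radius M = cmod z" by auto
  from z(1) obtain w where w: "w \<in> carrier_vec (n1+n2)" "w \<noteq> 0\<^sub>v (n1+n2)" "M *\<^sub>v w = z \<cdot>\<^sub>v w"
    unfolding spectrum_def eigenvalue_def eigenvector_def using M by auto
  define x where "x = vec_first w n1"
  define y where "y = vec_last w n2"
  have wxy: "w = x @\<^sub>v y" unfolding x_def y_def using w(1) by simp
  have xc: "x \<in> carrier_vec n1" and yc: "y \<in> carrier_vec n2" unfolding x_def y_def by auto
  have nz: "x @\<^sub>v y \<noteq> 0\<^sub>v (n1+n2)" using w(2) wxy by simp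
  have eig: "iterMc n1 n2 (cmat C) (complex_of_real g1) (complex_of_real g2) *\<^sub>v (x @\<^sub>v y) = z \<cdot>\<^sub>v (x @\<^sub>v y)"
    using w(3) wxy unfolding M_def by simp
  have "cmod z \<le> v"
    by (rule UB[OF Cc g1 g2 v0 d quad Heig Hcase xc yc nz eig])
  thus ?thesis unfolding rho_iterM[OF C] M_def[symmetric] z(2) .
qed


theorem mainTheorem14:
  fixes m n1 n2 :: nat and A1 A2 :: "real mat"
  assumes A1: "A1 \<in> carrier_mat m n1" and A2: "A2 \<in> carrier_mat m n2"
    and fullrank: "vec_space.rank m (hcat A1 A2) = n1 + n2"
    and orth1: "transpose_mat A1 * A1 = 1\<^sub>m n1"
    and orth2: "transpose_mat A2 * A2 = 1\<^sub>m n2"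
    and Cnz: "transpose_mat A2 * A1 \<noteq> 0\<^sub>m n2 n1"
    and rankC: "vec_space.rank n2 (transpose_mat A2 * A1) = min n1 n2"
  shows "let C = transpose_mat A2 * A1; r = min n1 n2;
             l1 = lambda_i (C * transpose_mat C) 1; lr = lambda_i (C * transpose_mat C) r;
             v = (sqrt (1 - lr) - sqrt (1 - l1)) / (sqrt (1 - lr) + sqrt (1 - l1))
         in (\<exists>g1 g2. 1 \<le> g1 \<and> 1 \<le> g2 \<and> rho (iterM n1 n2 C g1 g2) = v) \<and>
            (\<forall>g1 g2. 1 \<le> g1 \<longrightarrow> 1 \<le> g2 \<longrightarrow> v \<le> rho (iterM n1 n2 C g1 g2))"
proof -
  define C where "C = transpose_mat A2 * A1"
  have C: "C \<in> carrier_mat n2 n1" unfolding C_def using A1 A2 by auto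
  have n1: "n1 \<ge> 1"
  proof (rule ccontr)
    assume "\<not> n1 \<ge> 1" hence "n1 = 0" by simp
    hence "C = 0\<^sub>m n2 n1" using C by (intro eq_matI) auto
    with Cnz show False unfolding C_def by simp
  qed
  have n2: "n2 \<ge> 1"
  proof (rule ccontr)
    assume "\<not> n2 \<ge> 1" hence "n2 = 0" by simp
    hence "C = 0\<^sub>m n2 n1" using C by (intro eq_matI) auto
    with Cnz show False unfolding C_def by simp
  qed
  define r where "r = min n1 n2"
  have r1: "r \<ge> 1" using n1 n2 by (simp add: r_def)
  have rkC: "vec_space.rank n2 C = r" using rankC unfolding C_def r_def .
  define S where "S = C * C\<^sup>T"
  have S: "S \<in> carrier_mat n2 n2" unfolding S_def using C by auto
  from roots_decomp[OF C rankC[folded C_def]] obtain P where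
    P: "proots (char_poly S) = replicate_mset (n2 - r) 0 + mset P" "length P = r" "\<forall>p\<in>set P. p > 0"
    unfolding S_def r_def by auto
  define L where "L = rev (sorted_list_of_multiset (proots (char_poly S)))"
  note SS = sorted_split[OF P(3) P(2) r1 P(1), folded L_def]
  define l1 where "l1 = lambda_i S 1"
  define lr where "lr = lambda_i S r"
  have l1L: "l1 = L ! 0" unfolding l1_def lambda_i_def eigs_desc_def L_def by simp
  have lrL: "lr = L ! (r-1)" unfolding lr_def lambda_i_def eigs_desc_def L_def by simp
  have l1P: "l1 \<in> set P" and lrP: "lr \<in> set P" using SS(1,2) l1L lrL by auto
  have bnd: "\<And>p. p \<in> set P \<Longrightarrow> lr \<le> p \<and> p \<le> l1" using SS(3) l1L lrL by auto
  have allr: "\<And>t. t \<in># proots (char_poly S) \<Longrightarrow> t = 0 \<or> t \<in> set P" using SS(4) by auto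
  have cpnz: "char_poly S \<noteq> 0" by (rule char_poly_nz[OF S])
  have rootP: "poly (char_poly S) t = 0" if "t \<in> set P" for t
  proof -
    have "t \<in># proots (char_poly S)" unfolding P(1) using that by simp
    thus ?thesis using set_count_proots[OF cpnz] by auto
  qed
  have realeig: "\<exists>u. u \<in> carrier_vec n2 \<and> u \<noteq> 0\<^sub>v n2 \<and> S *\<^sub>v u = t \<cdot>\<^sub>v u" if "t \<in> set P" for t
  proof -
    have "eigenvalue S t" using rootP[OF that] eigenvalue_root_char_poly[OF S] by simp
    thus ?thesis unfolding eigenvalue_def eigenvector_def using S by auto
  qed
  have l1lt: "l1 < 1"
  proof -
    obtain u where u: "u \<in> carrier_vec n2" "u \<noteq> 0\<^sub>v n2" "S *\<^sub>v u = l1 \<cdot>\<^sub>v u" using realeig[OF l1P] by auto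
    show ?thesis by (rule eig_lt1[OF A1 A2 fullrank orth1 orth2 u(1,2)]) (use u(3) in \<open>simp add: S_def C_def\<close>)
  qed
  have lr0: "lr > 0" using lrP P(3) by auto
  have lrl1: "lr \<le> l1" using bnd[OF lrP] by simp
  define a where "a = 1 - l1"
  define b where "b = 1 - lr"
  have a0: "a > 0" and ab: "a \<le> b" and b1: "b \<le> 1" using l1lt lrl1 lr0 unfolding a_def b_def by auto
  define v where "v = (sqrt b - sqrt a)/(sqrt b + sqrt a)"
  have v0: "v \<ge> 0" unfolding v_def using ab a0 by simp
  have n12: "n1 + n2 > 0" using n1 by simp
  have low: "v \<le> rho (iterM n1 n2 C g1 g2)" if g1: "1 \<le> g1" and g2: "1 \<le> g2" for g1 g2
  proof -
    define R where "R = rho (iterM n1 n2 C g1 g2)"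
    define d where "d = (g1-1)*(g2-1)"
    define Pg where "Pg = g1*g2"
    have Pg0: "Pg > 0" unfolding Pg_def using g1 g2 by simp
    have hb: "\<And>z. z^2 - complex_of_real (d + 1 - Pg*(1-t)) * z + complex_of_real d = 0 \<Longrightarrow> cmod z \<le> R"
      if tP: "t \<in> set P" for t
    proof -
      fix z assume z: "z^2 - complex_of_real (d + 1 - Pg*(1-t)) * z + complex_of_real d = 0"
      obtain u where u: "u \<in> carrier_vec n2" "u \<noteq> 0\<^sub>v n2" "S *\<^sub>v u = t \<cdot>\<^sub>v u" using realeig[OF tP] by auto
      show "cmod z \<le> R" unfolding R_def
        by (rule LBt[OF C u(1,2) u(3)[unfolded S_def] _ g1 g2]) (use P(3) tP z d_def Pg_def in auto)
    qed
    from quad_bound[of "d + 1 - Pg*(1-l1)" d R, OF hb[OF l1P]] have qa: "d \<le> R^2" "\<bar>d + 1 - Pg*a\<bar> * R \<le> R^2 + d" "\<bar>d + 1 - Pg*a\<bar> \<le> 2*R"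
      unfolding a_def by auto
    from quad_bound[of "d + 1 - Pg*(1-lr)" d R, OF hb[OF lrP]] have qb: "\<bar>d + 1 - Pg*b\<bar> * R \<le> R^2 + d" "\<bar>d + 1 - Pg*b\<bar> \<le> 2*R"
      unfolding b_def by auto
    have R0: "R \<ge> 0" using qa(3) by simp
    have "v \<le> R" unfolding v_def by (rule lower_final[OF a0 ab R0 Pg0 qa(1) qa(2) qa(3) qb(1) qb(2)])
    thus ?thesis unfolding R_def .
  qed
  from upper_construct[OF a0 ab b1, folded v_def] obtain x y where
    xy: "0 \<le> x" "x \<le> v" "0 \<le> y" "x*y = v^2"
      "\<And>\<mu>. a \<le> \<mu> \<Longrightarrow> \<mu> \<le> b \<Longrightarrow> (v^2 + 1 - (1+x)*(1+y)*\<mu>)^2 \<le> 4*v^2" by blast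
  have Heig: "lam = 0 \<or> (\<exists>t. lam = complex_of_real t \<and> lr \<le> t \<and> t \<le> l1)"
    if yc: "yv \<in> carrier_vec n2" "yv \<noteq> 0\<^sub>v n2" "cmat C *\<^sub>v ((cmat C)\<^sup>T *\<^sub>v yv) = lam \<cdot>\<^sub>v yv" for lam yv
  proof -
    have "cmat S *\<^sub>v yv = lam \<cdot>\<^sub>v yv" unfolding S_def cmat_gram[OF C] using yc C
      by (subst assoc_mult_mat_vec) auto
    hence "eigenvalue (cmat S) lam" unfolding eigenvalue_def eigenvector_def using yc S by auto
    from gram_eigenvalue[OF C this[unfolded S_def]] obtain t where
      t: "lam = complex_of_real t" "poly (char_poly S) t = 0" unfolding S_def by auto
    have "t \<in># proots (char_poly S)" using t(2) set_count_proots[OF cpnz] by auto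
    from allr[OF this] show ?thesis using t(1) bnd by auto
  qed
  have quadg: "(v^2 + 1 - g1*g2*(1-t))^2 \<le> 4*v^2" if "g1*g2 = (1+x)*(1+y)" "lr \<le> t" "t \<le> l1" for g1 g2 t
    using xy(5)[of "1-t"] that unfolding a_def b_def by (simp add: mult.assoc)
  have up: "\<exists>g1 g2. 1 \<le> g1 \<and> 1 \<le> g2 \<and> rho (iterM n1 n2 C g1 g2) = v"
  proof (cases "n1 \<le> n2")
    case True
    define g1 where "g1 = 1 + y"
    define g2 where "g2 = 1 + x"
    have g1: "g1 \<ge> 1" and g2: "g2 \<ge> 1" unfolding g1_def g2_def using xy by auto
    have d: "(g1-1)*(g2-1) = v^2" unfolding g1_def g2_def using xy(4) by (simp add: mult.commute)
    have CT: "C\<^sup>T \<in> carrier_mat n1 n2" using C by auto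
    have injr: "\<forall>u\<in>carrier_vec n1. C\<^sup>T\<^sup>T *\<^sub>v u = 0\<^sub>v n2 \<longrightarrow> u = 0\<^sub>v n1"
      using vec_space.rank_inj[OF C] rkC True unfolding r_def by auto
    have injA: "\<forall>xv\<in>carrier_vec n1. (cmat C)\<^sup>T *\<^sub>v (cmat C *\<^sub>v xv) = 0\<^sub>v n1 \<longrightarrow> xv = 0\<^sub>v n1"
    proof (intro ballI impI)
      fix xv :: "complex vec" assume "xv \<in> carrier_vec n1" "(cmat C)\<^sup>T *\<^sub>v (cmat C *\<^sub>v xv) = 0\<^sub>v n1"
      thus "xv = 0\<^sub>v n1" using cinj[OF CT injr] by (simp add: map_mat_transpose)
    qed
    have "rho (iterM n1 n2 C g1 g2) \<le> v"
      by (rule UBrho[OF C n12 g1 g2 v0 d quadg Heig])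
        (use injA xy g2_def g1_def in \<open>auto simp: mult.commute\<close>)
    moreover have "v \<le> rho (iterM n1 n2 C g1 g2)" by (rule low[OF g1 g2])
    ultimately show ?thesis using g1 g2 by (intro exI[of _ g1] exI[of _ g2]) auto
  next
    case False
    define g1 where "g1 = 1 + x"
    define g2 where "g2 = 1 + y"
    have g1: "g1 \<ge> 1" and g2: "g2 \<ge> 1" unfolding g1_def g2_def using xy by auto
    have d: "(g1-1)*(g2-1) = v^2" unfolding g1_def g2_def using xy(4) by simp
    have injr: "\<forall>u\<in>carrier_vec n2. C\<^sup>T *\<^sub>v u = 0\<^sub>v n1 \<longrightarrow> u = 0\<^sub>v n2"
      using rank_row_inj[OF C] rkC False unfolding r_def by auto
    have injB: "\<forall>yv\<in>carrier_vec n2. cmat C *\<^sub>v ((cmat C)\<^sup>T *\<^sub>v yv) = 0\<^sub>v n2 \<longrightarrow> yv = 0\<^sub>v n2"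
      using cinj[OF C injr] by auto
    have "rho (iterM n1 n2 C g1 g2) \<le> v"
      by (rule UBrho[OF C n12 g1 g2 v0 d quadg Heig])
        (use injB xy g2_def g1_def in \<open>auto simp: mult.commute\<close>)
    moreover have "v \<le> rho (iterM n1 n2 C g1 g2)" by (rule low[OF g1 g2])
    ultimately show ?thesis using g1 g2 by (intro exI[of _ g1] exI[of _ g2]) auto
  qed
  have main: "(\<exists>g1 g2. 1 \<le> g1 \<and> 1 \<le> g2 \<and> rho (iterM n1 n2 C g1 g2) = v) \<and>
            (\<forall>g1 g2. 1 \<le> g1 \<longrightarrow> 1 \<le> g2 \<longrightarrow> v \<le> rho (iterM n1 n2 C g1 g2))"
    using up low by auto
  show ?thesis unfolding Let_def C_def[symmetric] r_def[symmetric] S_def[symmetric]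
      l1_def[symmetric] lr_def[symmetric]
    using main unfolding v_def a_def b_def .
qed


end
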